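(* Let $u\in W^v$ and $\mu\in Y$. For every $\nu\in R_u(\mu)$ there exist real numbers $\lambda_{u'}\in[0,1]$, $u'\in[1,u]$, with $\sum_{u'\le u}\lambda_{u'}=1$ and $\nu=\sum_{u'\le u}\lambda_{u'}\,u'(\mu)$.
   Context: $I$ finite, $A$ a generalized Cartan matrix, $Y$ a free $\mathbb Z$-module of finite rank with free family $(\alpha_i^\vee)_{i\in I}$ and $\alpha_i\in\mathrm{Hom}(Y,\mathbb Z)$ with $\alpha_j(\alpha_i^\vee)=a_{i,j}$; $\mathbb A=Y\otimes\mathbb R$; $r_i(v)=v-\alpha_i(v)\alpha_i^\vee$; $W^v=\langle r_i\rangle$ with Bruhat order $\le$, $[1,u]=\{w:w\le u\}$; $Q^\vee=\bigoplus\mathbb Z\alpha_i^\vee$. For $E\subset Y$, $R_i(E)=\mathrm{conv}(E\cup r_i(E))\cap(E+Q^\vee)$; for $w\in W^v$, $\lambda\in Y$, $R_w(\lambda)=\bigcup R_{i_1}(R_{i_2}(\cdots R_{i_k}(\{\lambda\})\cdots))$ over all reduced expressions $w=r_{i_1}\cdots r_{i_k}$. *)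

theory Defs
  imports "HOL-Analysis.Analysis"
begin

text \<open>Y is modelled as the lattice of integer points of real^'d (free Z-module of rank CARD('d));
  A = Y \<otimes> R is real^'d.  alpha i is the integer coefficient vector of the form alpha_i,
  so alpha_i(v) = alpha i \<bullet> v.  coalpha i is the coroot alpha_i^vee.\<close>

definition Ylat :: "(real^'d) set" where
  "Ylat = {v. \<forall>k. v $ k \<in> \<int>}"

definition gcm :: "'i set \<Rightarrow> ('i \<Rightarrow> 'i \<Rightarrow> int) \<Rightarrow> bool" where
  "gcm I a \<longleftrightarrow> (\<forall>i\<in>I. a i i = 2) \<and> (\<forall>i\<in>I. \<forall>j\<in>I. i \<noteq> j \<longrightarrow> a i j \<le> 0)
     \<and> (\<forall>i\<in>I. \<forall>j\<in>I. a i j = 0 \<longleftrightarrow> a j i = 0)"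

definition srefl :: "('i \<Rightarrow> real^'d) \<Rightarrow> ('i \<Rightarrow> real^'d) \<Rightarrow> 'i \<Rightarrow> real^'d \<Rightarrow> real^'d" where
  "srefl alpha coalpha i v = v - (alpha i \<bullet> v) *\<^sub>R coalpha i"

definition wmap :: "('i \<Rightarrow> real^'d) \<Rightarrow> ('i \<Rightarrow> real^'d) \<Rightarrow> 'i list \<Rightarrow> real^'d \<Rightarrow> real^'d" where
  "wmap alpha coalpha ws = foldr (\<lambda>i f. srefl alpha coalpha i \<circ> f) ws id"

definition Weyl :: "'i set \<Rightarrow> ('i \<Rightarrow> real^'d) \<Rightarrow> ('i \<Rightarrow> real^'d) \<Rightarrow> (real^'d \<Rightarrow> real^'d) set" where
  "Weyl I alpha coalpha = {wmap alpha coalpha ws | ws. set ws \<subseteq> I}"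

definition wlen :: "'i set \<Rightarrow> ('i \<Rightarrow> real^'d) \<Rightarrow> ('i \<Rightarrow> real^'d) \<Rightarrow> (real^'d \<Rightarrow> real^'d) \<Rightarrow> nat" where
  "wlen I alpha coalpha w = (LEAST n. \<exists>ws. set ws \<subseteq> I \<and> length ws = n \<and> wmap alpha coalpha ws = w)"

definition reduced_expr :: "'i set \<Rightarrow> ('i \<Rightarrow> real^'d) \<Rightarrow> ('i \<Rightarrow> real^'d) \<Rightarrow> (real^'d \<Rightarrow> real^'d) \<Rightarrow> 'i list \<Rightarrow> bool" where
  "reduced_expr I alpha coalpha w ws \<longleftrightarrow> set ws \<subseteq> I \<and> wmap alpha coalpha ws = w
      \<and> length ws = wlen I alpha coalpha w"

text \<open>Reflections of W^v: conjugates w r_i w^{-1}; note wmap (rev ws) is the inverse of wmap ws.\<close>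
definition Wrefls :: "'i set \<Rightarrow> ('i \<Rightarrow> real^'d) \<Rightarrow> ('i \<Rightarrow> real^'d) \<Rightarrow> (real^'d \<Rightarrow> real^'d) set" where
  "Wrefls I alpha coalpha = {wmap alpha coalpha ws \<circ> srefl alpha coalpha i \<circ> wmap alpha coalpha (rev ws)
      | ws i. set ws \<subseteq> I \<and> i \<in> I}"

definition bruhat_step :: "'i set \<Rightarrow> ('i \<Rightarrow> real^'d) \<Rightarrow> ('i \<Rightarrow> real^'d) \<Rightarrow> (real^'d \<Rightarrow> real^'d) \<Rightarrow> (real^'d \<Rightarrow> real^'d) \<Rightarrow> bool" where
  "bruhat_step I alpha coalpha x y \<longleftrightarrow> x \<in> Weyl I alpha coalpha
     \<and> (\<exists>t\<in>Wrefls I alpha coalpha. y = x \<circ> t) \<and> wlen I alpha coalpha x < wlen I alpha coalpha y"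

definition bruhat_le :: "'i set \<Rightarrow> ('i \<Rightarrow> real^'d) \<Rightarrow> ('i \<Rightarrow> real^'d) \<Rightarrow> (real^'d \<Rightarrow> real^'d) \<Rightarrow> (real^'d \<Rightarrow> real^'d) \<Rightarrow> bool" where
  "bruhat_le I alpha coalpha x y \<longleftrightarrow> x \<in> Weyl I alpha coalpha \<and> (bruhat_step I alpha coalpha)\<^sup>*\<^sup>* x y"

definition Qcoroot :: "'i set \<Rightarrow> ('i \<Rightarrow> real^'d) \<Rightarrow> (real^'d) set" where
  "Qcoroot I coalpha = {\<Sum>i\<in>I. of_int (n i) *\<^sub>R coalpha i | n. True}"

definition Rop :: "'i set \<Rightarrow> ('i \<Rightarrow> real^'d) \<Rightarrow> ('i \<Rightarrow> real^'d) \<Rightarrow> 'i \<Rightarrow> (real^'d) set \<Rightarrow> (real^'d) set" where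
  "Rop I alpha coalpha i E = convex hull (E \<union> srefl alpha coalpha i ` E)
      \<inter> {e + q | e q. e \<in> E \<and> q \<in> Qcoroot I coalpha}"

definition Rw :: "'i set \<Rightarrow> ('i \<Rightarrow> real^'d) \<Rightarrow> ('i \<Rightarrow> real^'d) \<Rightarrow> (real^'d \<Rightarrow> real^'d) \<Rightarrow> real^'d \<Rightarrow> (real^'d) set" where
  "Rw I alpha coalpha w lam = \<Union> {foldr (Rop I alpha coalpha) ws {lam} | ws. reduced_expr I alpha coalpha w ws}"

end

theory Submission
  imports Defs
begin

definition del :: "nat \<Rightarrow> 'a list \<Rightarrow> 'a list" where "del p xs = take p xs @ drop (Suc p) xs"

inductive sw :: "'a list \<Rightarrow> 'a list \<Rightarrow> bool" where
  sw_nil: "sw [] []" | sw_skip: "sw vs ws \<Longrightarrow> sw vs (w#ws)" | sw_take: "sw vs ws \<Longrightarrow> sw (w#vs) (w#ws)"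

fun aw :: "'i \<Rightarrow> 'i \<Rightarrow> nat \<Rightarrow> 'i list" where
  "aw j i 0 = []" | "aw j i (Suc n) = aw i j n @ [j]"

fun gseq :: "real \<Rightarrow> real \<Rightarrow> nat \<Rightarrow> real \<times> real" where
  "gseq A B 0 = (1,0)"
| "gseq A B (Suc n) = (if even n then (fst (gseq A B n), B * fst (gseq A B n) - snd (gseq A B n))
      else (A * snd (gseq A B n) - fst (gseq A B n), snd (gseq A B n)))"

locale KM =
  fixes I :: "'i set" and a :: "'i \<Rightarrow> 'i \<Rightarrow> int" and alpha coalpha :: "'i \<Rightarrow> real^'d"
  assumes finI: "finite I" and gcm: "gcm I a"
    and injc: "inj_on coalpha I" and indc: "independent (coalpha ` I)"
    and pair: "\<forall>i\<in>I. \<forall>j\<in>I. alpha j \<bullet> coalpha i = of_int (a i j)"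
begin

abbreviation r where "r \<equiv> srefl alpha coalpha"
abbreviation wm where "wm \<equiv> wmap alpha coalpha"
abbreviation W where "W \<equiv> Weyl I alpha coalpha"
abbreviation l where "l \<equiv> wlen I alpha coalpha"
abbreviation c where "c \<equiv> coalpha"

lemma alpha_c: "i \<in> I \<Longrightarrow> j \<in> I \<Longrightarrow> alpha i \<bullet> c j = of_int (a j i)"
  using pair by auto

lemma alpha_cc: "i \<in> I \<Longrightarrow> alpha i \<bullet> c i = 2"
  using pair gcm unfolding gcm_def by auto

lemma r_invol[simp]: "i \<in> I \<Longrightarrow> r i (r i v) = v"
  unfolding srefl_def using alpha_cc[of i]
  by (simp add: inner_diff_right algebra_simps)

lemma r_comp: "i \<in> I \<Longrightarrow> r i \<circ> r i = id"
  by (auto simp: fun_eq_iff)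

lemma r_cc: "i \<in> I \<Longrightarrow> r i (c i) = - c i"
  unfolding srefl_def using alpha_cc[of i] by (simp add: scaleR_2)

lemma lin_r: "linear (r i)"
  unfolding srefl_def
  by (rule linearI) (auto simp: inner_add_right algebra_simps)

lemma wm_Nil[simp]: "wm [] = id" by (simp add: wmap_def)
lemma wm_Cons[simp]: "wm (i#ws) = r i \<circ> wm ws" by (simp add: wmap_def)
lemma wm_append: "wm (xs @ ys) = wm xs \<circ> wm ys"
  by (induction xs) auto

lemma lin_wm: "linear (wm ws)"
proof (induction ws)
  case Nil
  then show ?case using linear_id unfolding id_def by simp
next
  case (Cons i ws)
  then show ?case using linear_compose[OF Cons.IH lin_r[of i]] by (simp add: o_def)
qed

lemma wm_rev1p[simp]: "set ws \<subseteq> I \<Longrightarrow> wm (rev ws) (wm ws v) = v"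
  by (induction ws arbitrary: v) (auto simp: wm_append)

lemma wm_rev2p[simp]: "set ws \<subseteq> I \<Longrightarrow> wm ws (wm (rev ws) v) = v"
  using wm_rev1p[of "rev ws"] by simp

lemma wm_rev1: "set ws \<subseteq> I \<Longrightarrow> wm (rev ws) \<circ> wm ws = id"
  by (auto simp: fun_eq_iff)
lemma wm_rev2: "set ws \<subseteq> I \<Longrightarrow> wm ws \<circ> wm (rev ws) = id"
  by (auto simp: fun_eq_iff)

lemma W_iff: "w \<in> W \<longleftrightarrow> (\<exists>ws. set ws \<subseteq> I \<and> w = wm ws)"
  unfolding Weyl_def by auto

lemma W_wm[intro]: "set ws \<subseteq> I \<Longrightarrow> wm ws \<in> W" by (auto simp: W_iff)
lemma W_comp[intro]: "x \<in> W \<Longrightarrow> y \<in> W \<Longrightarrow> x \<circ> y \<in> W"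
  unfolding W_iff by (metis Un_least set_append wm_append)
lemma W_r[intro]: "i \<in> I \<Longrightarrow> r i \<in> W"
  using W_wm[of "[i]"] by simp
lemma W_id[intro]: "id \<in> W" using W_wm[of "[]"] by simp

lemma l_le: "set ws \<subseteq> I \<Longrightarrow> l (wm ws) \<le> length ws"
  unfolding wlen_def by (rule Least_le) auto

lemma l_ex: assumes "w \<in> W" shows "\<exists>ws. set ws \<subseteq> I \<and> wm ws = w \<and> length ws = l w"
proof -
  from assms obtain ws where "set ws \<subseteq> I" "w = wm ws" by (auto simp: W_iff)
  then have "\<exists>n ws. set ws \<subseteq> I \<and> length ws = n \<and> wm ws = w" by auto
  from LeastI_ex[OF this] show ?thesis unfolding wlen_def by auto
qed

lemma l_sub: assumes "x \<in> W" "y \<in> W" shows "l (x \<circ> y) \<le> l x + l y"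
proof -
  obtain xs where xs: "set xs \<subseteq> I" "wm xs = x" "length xs = l x" using l_ex[OF assms(1)] by auto
  obtain ys where ys: "set ys \<subseteq> I" "wm ys = y" "length ys = l y" using l_ex[OF assms(2)] by auto
  have "l (wm (xs @ ys)) \<le> length (xs @ ys)" using xs ys by (intro l_le) auto
  then show ?thesis using xs ys by (simp add: wm_append)
qed

lemma l_id[simp]: "l id = 0"
  using l_le[of "[]"] by simp

lemma l0: assumes "w \<in> W" "l w = 0" shows "w = id"
  using l_ex[OF assms(1)] assms(2) by auto

lemma l_r_le: "w \<in> W \<Longrightarrow> i \<in> I \<Longrightarrow> l (w \<circ> r i) \<le> l w + 1"
  using l_sub[of w "r i"] l_le[of "[i]"] by fastforce
lemma l_rl_le: "w \<in> W \<Longrightarrow> i \<in> I \<Longrightarrow> l (r i \<circ> w) \<le> l w + 1"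
  using l_sub[of "r i" w] l_le[of "[i]"] by fastforce
lemma l_r_ge: "w \<in> W \<Longrightarrow> i \<in> I \<Longrightarrow> l w \<le> l (w \<circ> r i) + 1"
  using l_r_le[of "w \<circ> r i" i] by (auto simp: comp_assoc r_comp)
lemma l_rl_ge: "w \<in> W \<Longrightarrow> i \<in> I \<Longrightarrow> l w \<le> l (r i \<circ> w) + 1"
  using l_rl_le[of "r i \<circ> w" i] by (auto simp: comp_assoc[symmetric] r_comp)

end

fun nad :: "'a list \<Rightarrow> bool" where
  "nad (x#y#xs) = (x \<noteq> y \<and> nad (y#xs))" | "nad _ = True"

lemma nad_split: "\<not> nad vs \<Longrightarrow> \<exists>xs x ys. vs = xs @ x # x # ys"
proof (induction vs rule: nad.induct)
  case (1 x y xs)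
  show ?case
  proof (cases "x = y")
    case True then show ?thesis by (rule_tac x="[]" in exI) auto
  next
    case False
    with 1 obtain xs' z ys where "y # xs = xs' @ z # z # ys" by auto
    then show ?thesis by (rule_tac x="x # xs'" in exI) auto
  qed
qed auto

lemma nad_tl: "nad (x#xs) \<Longrightarrow> nad xs"
  by (cases xs) auto

lemma aw_len[simp]: "length (aw j i n) = n" by (induction n arbitrary: i j) auto
lemma aw_set: "set (aw j i n) \<subseteq> {i,j}" by (induction n arbitrary: i j) auto
lemma aw_last: "n > 0 \<Longrightarrow> last (aw j i n) = j"
  by (cases n) auto
lemma aw_Cons: "aw j i (Suc n) = (if even n then j else i) # aw j i n"
proof (induction n arbitrary: i j)
  case 0 then show ?case by simp
next
  case (Suc n)
  have "aw j i (Suc (Suc n)) = aw i j (Suc n) @ [j]" by simp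
  also have "\<dots> = ((if even n then i else j) # aw i j n) @ [j]" using Suc by simp
  also have "\<dots> = (if even (Suc n) then j else i) # aw j i (Suc n)" by simp
  finally show ?case .
qed
lemma aw_hd: "hd (aw j i (Suc n)) = (if even n then j else i)" by (simp only: aw_Cons) simp
lemma aw_split: "\<exists>X. aw j i (d + n) = X @ aw j i n"
proof (induction n arbitrary: i j)
  case 0 then show ?case by simp
next
  case (Suc n)
  then obtain X where "aw i j (d + n) = X @ aw i j n" by blast
  then show ?case by (rule_tac x="X" in exI) simp
qed

lemma aw_char: "i \<noteq> j \<Longrightarrow> set vs \<subseteq> {i,j} \<Longrightarrow> nad vs \<Longrightarrow> (vs \<noteq> [] \<longrightarrow> last vs = j) \<Longrightarrow> vs = aw j i (length vs)"
proof (induction vs)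
  case (Cons x vs)
  show ?case
  proof (cases vs)
    case Nil then show ?thesis using Cons by auto
  next
    case (Cons y ys)
    obtain m where m: "length vs = Suc m" using \<open>vs = y # ys\<close> by auto
    have pre: "set vs \<subseteq> {i,j}" "nad vs" "vs \<noteq> [] \<longrightarrow> last vs = j"
      using Cons.prems nad_tl[of x vs] \<open>vs = y # ys\<close> by auto
    have IH: "vs = aw j i (Suc m)"
      using Cons.IH[OF Cons.prems(1) pre] m by simp
    have "hd vs = (if even m then j else i)" using aw_hd[of j i m] by (subst IH)
    moreover have "x \<noteq> hd vs" using Cons.prems(3) \<open>vs = y # ys\<close> by auto
    moreover have "x \<in> {i,j}" using Cons.prems(2) by auto
    ultimately have "x = (if even (Suc m) then j else i)" by auto
    then have "x # vs = aw j i (Suc (Suc m))" using IH by (simp only: aw_Cons[of j i "Suc m"])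
    then show ?thesis using m by simp
  qed
qed auto

lemma gseq_inf:
  assumes "0 \<le> A" "0 \<le> B" "4 \<le> A*B"
  shows "0 \<le> fst (gseq A B n) \<and> 0 \<le> snd (gseq A B n) \<and>
     (even n \<longrightarrow> 2 * snd (gseq A B n) \<le> B * fst (gseq A B n)) \<and>
     (odd n \<longrightarrow> 2 * fst (gseq A B n) \<le> A * snd (gseq A B n))"
proof (induction n)
  case 0 then show ?case using assms by simp
next
  case (Suc n)
  define p where "p = fst (gseq A B n)"
  define q where "q = snd (gseq A B n)"
  have p: "0 \<le> p" and q: "0 \<le> q" using Suc unfolding p_def q_def by auto
  show ?case
  proof (cases "even n")
    case True
    have h: "2*q \<le> B*p" using Suc True unfolding p_def q_def by auto
    have h1: "A*(2*q) \<le> A*(B*p)" using mult_left_mono[OF h assms(1)] .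
    have h2: "4*p \<le> (A*B)*p" using mult_right_mono[OF assms(3) p] .
    have "2*p \<le> A*(B*p - q)" using h1 h2 by (simp add: algebra_simps)
    then show ?thesis using True p q h unfolding p_def q_def by auto
  next
    case False
    have h: "2*p \<le> A*q" using Suc False unfolding p_def q_def by auto
    have h1: "B*(2*p) \<le> B*(A*q)" using mult_left_mono[OF h assms(2)] .
    have h2: "4*q \<le> (A*B)*q" using mult_right_mono[OF assms(3) q] .
    have "2*q \<le> B*(A*q - p)" using h1 h2 by (simp add: algebra_simps)
    then show ?thesis using False p q h unfolding p_def q_def by auto
  qed
qed

context KM begin

definition Pos where "Pos = {v. \<exists>n. (\<forall>k\<in>I. 0 \<le> n k) \<and> v = (\<Sum>k\<in>I. n k *\<^sub>R c k)}"

lemma coef0: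
  assumes "(\<Sum>k\<in>I. n k *\<^sub>R c k) = 0" "k \<in> I" shows "n k = 0"
proof -
  define u where "u v = n (inv_into I c v)" for v
  have "(\<Sum>v\<in>c ` I. u v *\<^sub>R v) = (\<Sum>k\<in>I. u (c k) *\<^sub>R c k)"
    by (simp add: sum.reindex[OF injc])
  also have "\<dots> = (\<Sum>k\<in>I. n k *\<^sub>R c k)"
    by (rule sum.cong) (auto simp: u_def inv_into_f_f[OF injc])
  finally have "(\<Sum>v\<in>c ` I. u v *\<^sub>R v) = 0" using assms by simp
  then have "u (c k) = 0"
  proof -
    assume s0: "(\<Sum>v\<in>c ` I. u v *\<^sub>R v) = 0"
    show "u (c k) = 0"
    proof (rule ccontr)
      assume "u (c k) \<noteq> 0"
      then have "dependent (c ` I)"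
        by (subst real_vector.dependent_finite[OF finite_imageI[OF finI]])
           (rule exI[of _ u], use s0 assms(2) in auto)
      then show False using indc by simp
    qed
  qed
  then show ?thesis by (simp add: u_def inv_into_f_f[OF injc assms(2)])
qed

lemma coef_unique:
  assumes "(\<Sum>k\<in>I. n k *\<^sub>R c k) = (\<Sum>k\<in>I. m k *\<^sub>R c k)" "k \<in> I" shows "n k = m k"
proof -
  have "(\<Sum>k\<in>I. (n k - m k) *\<^sub>R c k) = 0"
    using assms(1) by (simp add: scaleR_diff_left sum_subtractf)
  from coef0[OF this assms(2)] show ?thesis by simp
qed

lemma sum_delta_c: "j \<in> I \<Longrightarrow> (\<Sum>k\<in>I. (if k = j then s else 0) *\<^sub>R c k) = s *\<^sub>R c j"
proof -
  assume "j \<in> I"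
  have "(\<Sum>k\<in>I. (if k = j then s else 0) *\<^sub>R c k) = (\<Sum>k\<in>I. if k = j then s *\<^sub>R c k else 0)"
    by (rule sum.cong) auto
  also have "\<dots> = s *\<^sub>R c j" using \<open>j \<in> I\<close> finI by (simp add: sum.delta)
  finally show ?thesis .
qed

lemma Pos_c: "k \<in> I \<Longrightarrow> c k \<in> Pos"
  unfolding Pos_def
  by (rule CollectI, rule exI[of _ "\<lambda>k'. if k' = k then 1 else 0"]) (simp add: sum_delta_c)

lemma Pos_add: "x \<in> Pos \<Longrightarrow> y \<in> Pos \<Longrightarrow> x + y \<in> Pos"
  unfolding Pos_def
  apply clarify
  subgoal for n m by (rule exI[of _ "\<lambda>k. n k + m k"]) (auto simp: scaleR_add_left sum.distrib)
  done

lemma Pos_scale: "x \<in> Pos \<Longrightarrow> 0 \<le> s \<Longrightarrow> s *\<^sub>R x \<in> Pos"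
  unfolding Pos_def
  apply clarify
  subgoal for n by (rule exI[of _ "\<lambda>k. s * n k"]) (auto simp: scaleR_sum_right)
  done

lemma Pos_neg: assumes "v \<in> Pos" "-v \<in> Pos" shows "v = 0"
proof -
  obtain n where n: "\<forall>k\<in>I. 0 \<le> n k" "v = (\<Sum>k\<in>I. n k *\<^sub>R c k)" using assms(1) unfolding Pos_def by auto
  obtain m where m: "\<forall>k\<in>I. 0 \<le> m k" "-v = (\<Sum>k\<in>I. m k *\<^sub>R c k)" using assms(2) unfolding Pos_def by auto
  have "(\<Sum>k\<in>I. (n k + m k) *\<^sub>R c k) = v + (-v)" using n m by (simp add: scaleR_add_left sum.distrib)
  then have s0: "(\<Sum>k\<in>I. (n k + m k) *\<^sub>R c k) = 0" by simp
  have "\<forall>k\<in>I. n k + m k = 0" by (intro ballI) (rule coef0[OF s0])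
  then have "\<forall>k\<in>I. n k = 0" using n m by (metis add_nonneg_eq_0_iff)
  then show ?thesis using n by simp
qed

lemma c_nz: "k \<in> I \<Longrightarrow> c k \<noteq> 0"
  using alpha_cc[of k] by auto

lemma wm_0: "wm ws 0 = 0" by (rule linear_0[OF lin_wm])
lemma wm_add: "wm ws (x + y) = wm ws x + wm ws y" by (rule linear_add[OF lin_wm])
lemma wm_scale: "wm ws (s *\<^sub>R x) = s *\<^sub>R wm ws x" by (rule linear_scale[OF lin_wm])
lemma wm_neg: "wm ws (- x) = - wm ws x" by (rule linear_neg[OF lin_wm])

lemma wm_nz: assumes "set ws \<subseteq> I" "v \<noteq> 0" shows "wm ws v \<noteq> 0"
proof
  assume "wm ws v = 0"
  have "v = wm (rev ws) (wm ws v)" using wm_rev1p[of ws v] assms(1) by simp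
  also have "\<dots> = 0" using \<open>wm ws v = 0\<close> wm_0 by simp
  finally show False using assms(2) by simp
qed

lemma r_Pos_neg:
  assumes "j \<in> I" "g \<in> Pos" "- (r j g) \<in> Pos" shows "\<exists>s. g = s *\<^sub>R c j"
proof -
  obtain n where n: "\<forall>k\<in>I. 0 \<le> n k" "g = (\<Sum>k\<in>I. n k *\<^sub>R c k)" using assms(2) unfolding Pos_def by auto
  obtain m where m: "\<forall>k\<in>I. 0 \<le> m k" "- (r j g) = (\<Sum>k\<in>I. m k *\<^sub>R c k)" using assms(3) unfolding Pos_def by auto
  define s where "s = alpha j \<bullet> g"
  have "r j g = g - s *\<^sub>R c j" unfolding srefl_def s_def by simp
  also have "\<dots> = (\<Sum>k\<in>I. (n k - (if k = j then s else 0)) *\<^sub>R c k)"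
    using n(2) sum_delta_c[OF assms(1), of s] by (simp add: scaleR_diff_left sum_subtractf)
  finally have e1: "r j g = (\<Sum>k\<in>I. (n k - (if k = j then s else 0)) *\<^sub>R c k)" .
  have "r j g = - (\<Sum>k\<in>I. m k *\<^sub>R c k)" using m(2) by (metis minus_minus)
  also have "\<dots> = (\<Sum>k\<in>I. (- m k) *\<^sub>R c k)" by (simp add: sum_negf)
  finally have s0: "(\<Sum>k\<in>I. (n k - (if k = j then s else 0)) *\<^sub>R c k) = (\<Sum>k\<in>I. (- m k) *\<^sub>R c k)"
    using e1 by simp
  have e: "\<forall>k\<in>I. n k - (if k = j then s else 0) = - m k"
    by (intro ballI) (rule coef_unique[OF s0])
  have z: "\<forall>k\<in>I. k \<noteq> j \<longrightarrow> n k = 0"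
  proof (intro ballI impI)
    fix k assume "k \<in> I" "k \<noteq> j"
    then have "n k = - m k" using e by auto
    moreover have "0 \<le> n k" "0 \<le> m k" using n(1) m(1) \<open>k \<in> I\<close> by auto
    ultimately show "n k = 0" by linarith
  qed
  have "g = (\<Sum>k\<in>I. (if k = j then n j else 0) *\<^sub>R c k)"
    unfolding n(2) by (rule sum.cong) (use z in auto)
  then have "g = n j *\<^sub>R c j" using sum_delta_c[OF assms(1), of "n j"] by simp
  then show ?thesis by blast
qed

end

lemma gseq_fin:
  "\<forall>n<2. 0 \<le> fst (gseq 0 0 n) \<and> 0 \<le> snd (gseq 0 0 n)"
  "\<forall>n<3. 0 \<le> fst (gseq 1 1 n) \<and> 0 \<le> snd (gseq 1 1 n)"
  "\<forall>n<4. 0 \<le> fst (gseq 1 2 n) \<and> 0 \<le> snd (gseq 1 2 n)"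
  "\<forall>n<4. 0 \<le> fst (gseq 2 1 n) \<and> 0 \<le> snd (gseq 2 1 n)"
  "\<forall>n<6. 0 \<le> fst (gseq 1 3 n) \<and> 0 \<le> snd (gseq 1 3 n)"
  "\<forall>n<6. 0 \<le> fst (gseq 3 1 n) \<and> 0 \<le> snd (gseq 3 1 n)"
  by (auto simp: less_Suc_eq numeral_eq_Suc)

context KM begin

definition Pc where "Pc v i j x y = v + x *\<^sub>R c i + y *\<^sub>R c j"

lemma Pc_cong: "x = x' \<Longrightarrow> y = y' \<Longrightarrow> Pc v i j x y = Pc v i j x' y'" by simp

lemma Pc_sub: "Pc v i j x y - s *\<^sub>R c i = Pc v i j (x - s) y"
  "Pc v i j x y - s *\<^sub>R c j = Pc v i j x (y - s)"
  unfolding Pc_def by (simp_all add: algebra_simps)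

lemma rPi: assumes ij: "i \<in> I" "j \<in> I" shows
   "r i (Pc v i j x y) = Pc v i j (x - (alpha i \<bullet> v + 2 * x + of_int (a j i) * y)) y"
proof -
  have h: "alpha i \<bullet> (Pc v i j x y) = alpha i \<bullet> v + 2 * x + of_int (a j i) * y"
    unfolding Pc_def by (simp only: inner_add_right inner_scaleR_right alpha_cc[OF ij(1)] alpha_c[OF ij]) simp
  show ?thesis unfolding srefl_def h Pc_sub ..
qed

lemma rPj: assumes ij: "i \<in> I" "j \<in> I" shows
   "r j (Pc v i j x y) = Pc v i j x (y - (alpha j \<bullet> v + of_int (a i j) * x + 2 * y))"
proof -
  have h: "alpha j \<bullet> (Pc v i j x y) = alpha j \<bullet> v + of_int (a i j) * x + 2 * y"
    unfolding Pc_def by (simp only: inner_add_right inner_scaleR_right alpha_cc[OF ij(2)] alpha_c[OF ij(2,1)]) simp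
  show ?thesis unfolding srefl_def h Pc_sub ..
qed

lemma gseq_wm: assumes "i \<in> I" "j \<in> I"
  shows "wm (aw j i n) (c i) = Pc 0 i j (fst (gseq (- of_int (a j i)) (- of_int (a i j)) n))
                                        (snd (gseq (- of_int (a j i)) (- of_int (a i j)) n))"
proof (induction n)
  case 0 then show ?case by (simp add: Pc_def)
next
  case (Suc n)
  show ?case using Suc assms by (auto simp del: aw.simps(2) simp: aw_Cons rPi rPj intro!: Pc_cong)
qed

lemma braid:
  assumes ij: "i \<in> I" "j \<in> I"
   and cs: "m = 2 \<and> a i j = 0 \<and> a j i = 0 \<or> m = 3 \<and> a i j = -1 \<and> a j i = -1 \<or>
     m = 4 \<and> a i j = -1 \<and> a j i = -2 \<or> m = 4 \<and> a i j = -2 \<and> a j i = -1 \<or>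
     m = 6 \<and> a i j = -1 \<and> a j i = -3 \<or> m = 6 \<and> a i j = -3 \<and> a j i = -1"
  shows "wm (aw j i m) = wm (aw i j m)"
proof
  fix v
  have "wm (aw j i m) (Pc v i j 0 0) = wm (aw i j m) (Pc v i j 0 0)"
    using cs by (elim disjE conjE; simp add: numeral_eq_Suc rPi rPj ij; rule Pc_cong; simp add: algebra_simps)
  then show "wm (aw j i m) v = wm (aw i j m) v" by (simp add: Pc_def)
qed

lemma ab_cases:
  assumes ij: "i \<in> I" "j \<in> I" "i \<noteq> j"
    and lt: "\<not> ((4::real) \<le> (- of_int (a j i)) * (- of_int (a i j)))"
  shows "a i j = 0 \<and> a j i = 0 \<or> a i j = -1 \<and> a j i = -1 \<or>
     a i j = -1 \<and> a j i = -2 \<or> a i j = -2 \<and> a j i = -1 \<or>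
     a i j = -1 \<and> a j i = -3 \<or> a i j = -3 \<and> a j i = -1"
proof -
  define x where "x = - a i j"
  define y where "y = - a j i"
  have x0: "0 \<le> x" and y0: "0 \<le> y" and xy0: "x = 0 \<longleftrightarrow> y = 0"
    using gcm ij unfolding gcm_def x_def y_def by auto
  have "real_of_int (y * x) < 4" using lt unfolding x_def y_def by simp
  then have lt4: "y * x < 4" by linarith
  have x3: "x \<le> 3"
  proof (rule ccontr)
    assume "\<not> x \<le> 3"
    then have "4 \<le> x" "1 \<le> y" using xy0 y0 by auto
    then have "4 * 1 \<le> x * y" by (intro mult_mono) auto
    then show False using lt4 by (simp add: mult.commute)
  qed
  have y3: "y \<le> 3"
  proof (rule ccontr)
    assume "\<not> y \<le> 3"
    then have "4 \<le> y" "1 \<le> x" using xy0 x0 by auto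
    then have "4 * 1 \<le> y * x" by (intro mult_mono) auto
    then show False using lt4 by simp
  qed
  have "x \<in> {0,1,2,3}" using x0 x3 by auto
  moreover have "y \<in> {0,1,2,3}" using y0 y3 by auto
  moreover have ax: "a i j = - x" and ay: "a j i = - y" unfolding x_def y_def by auto
  ultimately show ?thesis using lt4 xy0 by auto
qed

lemma dihedral:
  assumes ij: "i \<in> I" "j \<in> I" "i \<noteq> j" and vs: "set vs \<subseteq> {i,j}"
    and m1: "\<And>vs'. set vs' \<subseteq> {i,j} \<Longrightarrow> wm vs' = wm vs \<Longrightarrow> length vs \<le> length vs'"
    and m2: "\<And>vs'. set vs' \<subseteq> {i,j} \<Longrightarrow> wm vs' = wm vs \<circ> r i \<Longrightarrow> length vs \<le> length vs'"
  shows "\<exists>p q. 0 \<le> p \<and> 0 \<le> q \<and> wm vs (c i) = p *\<^sub>R c i + q *\<^sub>R c j"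
proof -
  have nad: "nad vs"
  proof (rule ccontr)
    assume "\<not> nad vs"
    then obtain xs x ys where e: "vs = xs @ x # x # ys" using nad_split by blast
    have "x \<in> I" using vs e ij by auto
    have "wm (xs @ ys) = wm vs" using e \<open>x \<in> I\<close> by (simp add: wm_append fun_eq_iff)
    moreover have "set (xs @ ys) \<subseteq> {i,j}" using vs e by auto
    ultimately have "length vs \<le> length (xs @ ys)" using m1 by blast
    then show False using e by simp
  qed
  have lastj: "vs \<noteq> [] \<longrightarrow> last vs = j"
  proof
    assume ne: "vs \<noteq> []"
    show "last vs = j"
    proof (rule ccontr)
      assume "last vs \<noteq> j"
      moreover have "last vs \<in> {i,j}" using vs last_in_set[OF ne] by auto
      ultimately have li: "last vs = i" by auto
      have e: "vs = butlast vs @ [i]" using ne li append_butlast_last_id by metis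
      have "wm vs \<circ> r i = wm (butlast vs)"
        by (subst e) (simp add: wm_append fun_eq_iff ij)
      moreover have "set (butlast vs) \<subseteq> {i,j}" using vs in_set_butlastD by fastforce
      ultimately have "length vs \<le> length (butlast vs)" using m2 by metis
      moreover have "length (butlast vs) < length vs" using ne by (cases vs) auto
      ultimately show False by linarith
    qed
  qed
  have vsaw: "vs = aw j i (length vs)" using aw_char[OF ij(3) vs nad lastj] .
  define k where "k = length vs"
  define A where "A = - real_of_int (a j i)"
  define B where "B = - real_of_int (a i j)"
  have coord: "wm vs (c i) = fst (gseq A B k) *\<^sub>R c i + snd (gseq A B k) *\<^sub>R c j"
    using gseq_wm[OF ij(1,2), of k] vsaw unfolding A_def B_def k_def Pc_def by simp
  have A0: "0 \<le> A" and B0: "0 \<le> B" using gcm ij unfolding gcm_def A_def B_def by auto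
  have "0 \<le> fst (gseq A B k) \<and> 0 \<le> snd (gseq A B k)"
  proof (cases "4 \<le> A * B")
    case True
    then show ?thesis using gseq_inf[OF A0 B0 True] by blast
  next
    case False
    then have cs: "a i j = 0 \<and> a j i = 0 \<or> a i j = -1 \<and> a j i = -1 \<or>
     a i j = -1 \<and> a j i = -2 \<or> a i j = -2 \<and> a j i = -1 \<or>
     a i j = -1 \<and> a j i = -3 \<or> a i j = -3 \<and> a j i = -1"
      using ab_cases[OF ij] unfolding A_def B_def by simp
    obtain m where mpos: "0 < m" and br: "wm (aw j i m) = wm (aw i j m)"
      and pos: "\<forall>n<m. 0 \<le> fst (gseq A B n) \<and> 0 \<le> snd (gseq A B n)"
    proof -
      from cs show ?thesis
      proof (elim disjE conjE)
        assume "a i j = 0" "a j i = 0"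
        then show ?thesis using that[of 2] braid[OF ij(1,2), of 2] gseq_fin unfolding A_def B_def by simp
      next
        assume "a i j = -1" "a j i = -1"
        then show ?thesis using that[of 3] braid[OF ij(1,2), of 3] gseq_fin unfolding A_def B_def by simp
      next
        assume "a i j = -1" "a j i = -2"
        then show ?thesis using that[of 4] braid[OF ij(1,2), of 4] gseq_fin unfolding A_def B_def by simp
      next
        assume "a i j = -2" "a j i = -1"
        then show ?thesis using that[of 4] braid[OF ij(1,2), of 4] gseq_fin unfolding A_def B_def by simp
      next
        assume "a i j = -1" "a j i = -3"
        then show ?thesis using that[of 6] braid[OF ij(1,2), of 6] gseq_fin unfolding A_def B_def by simp
      next
        assume "a i j = -3" "a j i = -1"
        then show ?thesis using that[of 6] braid[OF ij(1,2), of 6] gseq_fin unfolding A_def B_def by simp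
      qed
    qed
    have "k < m"
    proof (rule ccontr)
      assume "\<not> k < m"
      then obtain X where X: "aw j i k = X @ aw j i m" using aw_split[of j i "k - m" m] by auto
      define Z where "Z = aw i j m"
      have Zne: "Z \<noteq> []" using mpos unfolding Z_def by (cases m) auto
      have Zl: "last Z = i" using aw_last[OF mpos] unfolding Z_def .
      have Ze: "Z = butlast Z @ [i]" using Zne Zl append_butlast_last_id by metis
      have "wm vs \<circ> r i = wm X \<circ> wm Z \<circ> r i"
        using vsaw X br unfolding k_def Z_def by (simp add: wm_append)
      also have "\<dots> = wm (X @ butlast Z)"
        by (subst Ze) (simp add: wm_append fun_eq_iff ij)
      finally have e: "wm (X @ butlast Z) = wm vs \<circ> r i" by simp
      have "set X \<subseteq> {i,j}" using X aw_set[of j i k] by auto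
      moreover have "set (butlast Z) \<subseteq> {i,j}" using aw_set[of i j m] in_set_butlastD unfolding Z_def by fastforce
      ultimately have "length vs \<le> length (X @ butlast Z)" using m2 e by (metis le_sup_iff set_append)
      moreover have "length X + m = k" using X[THEN arg_cong[where f=length]] by simp
      moreover have "length Z = m" unfolding Z_def by simp
      ultimately show False using mpos unfolding k_def by simp
    qed
    then show ?thesis using pos by blast
  qed
  then show ?thesis using coord by blast
qed

end

lemma del_len: "p < length xs \<Longrightarrow> length (del p xs) = length xs - 1"
  unfolding del_def by simp
lemma del_set: "set (del p xs) \<subseteq> set xs"
  unfolding del_def by (auto dest: in_set_takeD in_set_dropD)
lemma del_Cons: "del (Suc p) (x # xs) = x # del p xs"
  unfolding del_def by simp
lemma del_0: "del 0 (x # xs) = xs"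
  unfolding del_def by simp

context KM begin

lemma W_lin: "w \<in> W \<Longrightarrow> linear w"
  using lin_wm by (auto simp: W_iff)

lemma last_descent:
  assumes ws: "set ws \<subseteq> I" "length ws = l (wm ws)" "ws \<noteq> []"
  shows "last ws \<in> I" "wm ws \<circ> r (last ws) = wm (butlast ws)" "l (wm ws \<circ> r (last ws)) < l (wm ws)"
proof -
  show j: "last ws \<in> I" using ws last_in_set by blast
  have e: "ws = butlast ws @ [last ws]" using ws(3) by simp
  show e2: "wm ws \<circ> r (last ws) = wm (butlast ws)"
    by (subst e) (simp add: wm_append fun_eq_iff j)
  have "set (butlast ws) \<subseteq> I" using ws(1) in_set_butlastD by fastforce
  then have "l (wm (butlast ws)) \<le> length ws - 1" using l_le by fastforce
  then show "l (wm ws \<circ> r (last ws)) < l (wm ws)" using e2 ws(2,3)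
    by (metis diff_less length_greater_0_conv less_numeral_extra(1) order_le_less_trans)
qed

lemma T_aux: "\<forall>w i. w \<in> W \<longrightarrow> i \<in> I \<longrightarrow> l w = n \<longrightarrow> l w \<le> l (w \<circ> r i) \<longrightarrow> w (c i) \<in> Pos"
proof (induction n rule: less_induct)
  case (less n)
  show ?case
  proof (intro allI impI)
    fix w i assume w: "w \<in> W" and i: "i \<in> I" and ln: "l w = n" and le: "l w \<le> l (w \<circ> r i)"
    obtain ws where ws: "set ws \<subseteq> I" "wm ws = w" "length ws = l w" using l_ex[OF w] by blast
    show "w (c i) \<in> Pos"
    proof (cases "ws = []")
      case True then have "w = id" using ws by simp
      then show ?thesis using Pos_c[OF i] by simp
    next
      case False
      define j where "j = last ws"
      have j: "j \<in> I" and wrj: "w \<circ> r j = wm (butlast ws)" and lwrj: "l (w \<circ> r j) < l w"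
        using last_descent[of ws] False ws unfolding j_def by auto
      have ij: "i \<noteq> j" using le lwrj by auto
      define Pr where "Pr = (\<lambda>(v, vs). v \<in> W \<and> set vs \<subseteq> {i,j} \<and> w = v \<circ> wm vs \<and> l v + length vs \<le> l w)"
      have P0: "Pr (w \<circ> r j, [j])"
        unfolding Pr_def using w j lwrj by (auto simp: fun_eq_iff)
      obtain pp where pp: "Pr pp" and pmin: "\<forall>q. Pr q \<longrightarrow> l (fst pp) \<le> l (fst q)"
        using ex_has_least_nat[of Pr "(w \<circ> r j, [j])" "\<lambda>p. l (fst p)", OF P0] by blast
      obtain v vs where pv: "pp = (v, vs)" by fastforce
      have v: "v \<in> W" and vs: "set vs \<subseteq> {i,j}" and wv: "w = v \<circ> wm vs" and lv0: "l v + length vs \<le> l w"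
        using pp unfolding pv Pr_def by auto
      have vsI: "set vs \<subseteq> I" using vs i j by auto
      have lv: "l v < l w" using pmin[rule_format, OF P0] lwrj unfolding pv by simp
      have vdesc: "l v \<le> l (v \<circ> r x)" if x: "x \<in> {i,j}" for x
      proof (rule ccontr)
        assume "\<not> l v \<le> l (v \<circ> r x)"
        then have lt: "l (v \<circ> r x) < l v" by simp
        have xI: "x \<in> I" using x i j by auto
        have e1: "w = (v \<circ> r x) \<circ> wm (x # vs)" using wv xI by (auto simp: fun_eq_iff)
        have e2: "l (v \<circ> r x) + length (x # vs) \<le> l w" using lt lv0 by simp
        have e3: "set (x # vs) \<subseteq> {i,j}" using x vs by auto
        have e4: "v \<circ> r x \<in> W" using v xI by auto
        have "Pr (v \<circ> r x, x # vs)"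
          unfolding Pr_def prod.case using e1 e2 e3 e4 by blast
        then have "l v \<le> l (v \<circ> r x)" using pmin unfolding pv by force
        then show False using lt by simp
      qed
      have lvn: "l v < n" using lv ln by simp
      have vci: "v (c i) \<in> Pos"
        by (rule less.IH[of "l v", rule_format, OF lvn v i refl vdesc]) simp
      have vcj: "v (c j) \<in> Pos"
        by (rule less.IH[of "l v", rule_format, OF lvn v j refl vdesc]) simp
      have m1: "length vs \<le> length vs'" if "set vs' \<subseteq> {i,j}" "wm vs' = wm vs" for vs'
      proof -
        have s: "set vs' \<subseteq> I" using that i j by auto
        have "l w \<le> l v + l (wm vs')" using wv that(2) l_sub[OF v W_wm[OF s]] by simp
        also have "\<dots> \<le> l v + length vs'" using l_le[OF s] by simp
        finally show ?thesis using lv0 by simp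
      qed
      have m2: "length vs \<le> length vs'" if "set vs' \<subseteq> {i,j}" "wm vs' = wm vs \<circ> r i" for vs'
      proof -
        have s: "set vs' \<subseteq> I" using that i j by auto
        have "w \<circ> r i = v \<circ> wm vs'" using wv that(2) by (simp add: comp_assoc)
        then have "l (w \<circ> r i) \<le> l v + l (wm vs')" using l_sub[OF v W_wm[OF s]] by simp
        also have "\<dots> \<le> l v + length vs'" using l_le[OF s] by simp
        finally show ?thesis using lv0 le by simp
      qed
      obtain p q where pq: "0 \<le> p" "0 \<le> q" "wm vs (c i) = p *\<^sub>R c i + q *\<^sub>R c j"
        using dihedral[OF i j ij vs m1 m2] by blast
      have "w (c i) = v (p *\<^sub>R c i + q *\<^sub>R c j)" using wv pq(3) by simp
      also have "\<dots> = p *\<^sub>R v (c i) + q *\<^sub>R v (c j)"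
        using W_lin[OF v] by (simp add: linear_add linear_scale)
      finally show ?thesis using Pos_add Pos_scale pq vci vcj by simp
    qed
  qed
qed

lemma T: assumes "w \<in> W" "i \<in> I" "l w \<le> l (w \<circ> r i)" shows "w (c i) \<in> Pos"
  by (rule T_aux[rule_format, OF assms(1,2) refl assms(3)])

lemma T_neg: assumes "w \<in> W" "i \<in> I" "l (w \<circ> r i) < l w" shows "- w (c i) \<in> Pos"
proof -
  have w': "w \<circ> r i \<in> W" using assms by auto
  have "(w \<circ> r i) \<circ> r i = w" using assms(2) by (auto simp: fun_eq_iff)
  then have "(w \<circ> r i) (c i) \<in> Pos" using T[OF w' assms(2)] assms(3) by simp
  moreover have "(w \<circ> r i) (c i) = - w (c i)"
    using r_cc[OF assms(2)] W_lin[OF assms(1)] by (simp add: linear_neg)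
  ultimately show ?thesis by simp
qed

lemma PN: assumes "w \<in> W" "i \<in> I" shows "w (c i) \<in> Pos \<or> - w (c i) \<in> Pos"
  using T[OF assms] T_neg[OF assms] by (meson not_le)

lemma W_nz: assumes "w \<in> W" "v \<noteq> 0" shows "w v \<noteq> 0"
  using assms wm_nz by (auto simp: W_iff)

lemma fix_id: assumes w: "w \<in> W" and fx: "\<forall>n\<in>I. w (c n) = c n" shows "w = id"
proof -
  obtain ws where ws: "set ws \<subseteq> I" "wm ws = w" "length ws = l w" using l_ex[OF w] by blast
  show ?thesis
  proof (cases "ws = []")
    case True then show ?thesis using ws by simp
  next
    case False
    define j where "j = last ws"
    have j: "j \<in> I" and lwrj: "l (w \<circ> r j) < l w"
      using last_descent[of ws] False ws unfolding j_def by auto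
    have "- c j \<in> Pos" using T_neg[OF w j lwrj] fx j by simp
    then have "c j = 0" using Pos_neg[OF Pos_c[OF j]] by simp
    then show ?thesis using c_nz[OF j] by simp
  qed
qed

lemma coef2:
  assumes "n \<in> I" "m \<in> I" "n \<noteq> m" "c n + x *\<^sub>R c m \<in> Pos \<or> - (c n + x *\<^sub>R c m) \<in> Pos"
  shows "0 \<le> x"
proof -
  define e where "e k = (if k = n then 1 else 0) + (if k = m then x else 0)" for k
  have ee: "c n + x *\<^sub>R c m = (\<Sum>k\<in>I. e k *\<^sub>R c k)"
    unfolding e_def by (simp add: scaleR_add_left sum.distrib sum_delta_c assms(1,2))
  from assms(4) show ?thesis
  proof
    assume "c n + x *\<^sub>R c m \<in> Pos"
    then obtain f where f: "\<forall>k\<in>I. 0 \<le> f k" "c n + x *\<^sub>R c m = (\<Sum>k\<in>I. f k *\<^sub>R c k)"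
      unfolding Pos_def by auto
    have "e m = f m" using coef_unique[of e f m] ee f(2) assms(2) by simp
    then show ?thesis using f(1) assms unfolding e_def by auto
  next
    assume "- (c n + x *\<^sub>R c m) \<in> Pos"
    then obtain f where f: "\<forall>k\<in>I. 0 \<le> f k" "- (c n + x *\<^sub>R c m) = (\<Sum>k\<in>I. f k *\<^sub>R c k)"
      unfolding Pos_def by auto
    have "(\<Sum>k\<in>I. (- e k) *\<^sub>R c k) = (\<Sum>k\<in>I. f k *\<^sub>R c k)"
      using ee f(2) by (simp add: sum_negf)
    then have "- e n = f n" using coef_unique[of "\<lambda>k. - e k" f n] assms(1) by simp
    then show ?thesis using f(1) assms unfolding e_def by auto
  qed
qed

end

lemma vl1: "(v::'a::real_vector) - a *\<^sub>R x - (b - a * 2) *\<^sub>R x = v + (a - b) *\<^sub>R x"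
proof -
  have e: "(b - a * 2) *\<^sub>R x = b *\<^sub>R x - (a *\<^sub>R x + a *\<^sub>R x)"
    by (simp only: mult_2_right scaleR_diff_left scaleR_add_left)
  show ?thesis unfolding e by (simp add: algebra_simps)
qed
lemma vl2: "(v::'a::real_vector) - b *\<^sub>R x - (a - 2 * b) *\<^sub>R x = v - (a - b) *\<^sub>R x"
proof -
  have e: "(a - 2 * b) *\<^sub>R x = a *\<^sub>R x - (b *\<^sub>R x + b *\<^sub>R x)"
    by (simp only: mult_2 scaleR_diff_left scaleR_add_left)
  show ?thesis unfolding e by (simp add: algebra_simps)
qed

context KM begin

lemma conj_refl:
  assumes zs: "set zs \<subseteq> I" and k: "k \<in> I" and m: "m \<in> I"
    and zc: "wm zs (c k) = s *\<^sub>R c m" and s0: "s \<noteq> 0"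
  shows "wm zs \<circ> r k \<circ> wm (rev zs) = r m"
proof -
  define z where "z = wm zs"
  define zi where "zi = wm (rev zs)"
  define t where "t = z \<circ> r k \<circ> zi"
  have lz: "linear z" and lzi: "linear zi" unfolding z_def zi_def by (simp_all add: lin_wm)
  have zzi: "z (zi v) = v" "zi (z v) = v" for v unfolding z_def zi_def using zs by simp_all
  have zi_cm: "zi (c m) = (1/s) *\<^sub>R c k"
  proof -
    have "c k = zi (s *\<^sub>R c m)" using zc zzi(2)[of "c k"] unfolding z_def by simp
    also have "\<dots> = s *\<^sub>R zi (c m)" using lzi by (simp add: linear_scale)
    finally show ?thesis using s0 by simp
  qed
  have tv: "t v = v - (s * (alpha k \<bullet> zi v)) *\<^sub>R c m" for v
  proof -
    have "t v = z (zi v - (alpha k \<bullet> zi v) *\<^sub>R c k)" unfolding t_def srefl_def by simp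
    also have "\<dots> = z (zi v) - (alpha k \<bullet> zi v) *\<^sub>R z (c k)" using lz by (simp add: linear_diff linear_scale)
    also have "\<dots> = v - (s * (alpha k \<bullet> zi v)) *\<^sub>R c m" using zzi zc unfolding z_def by simp
    finally show ?thesis .
  qed
  define psi where "psi v = s * (alpha k \<bullet> zi v) - alpha m \<bullet> v" for v
  have gv: "r m (t v) = v + psi v *\<^sub>R c m" for v
  proof -
    have a: "alpha m \<bullet> t v = alpha m \<bullet> v - (s * (alpha k \<bullet> zi v)) * 2"
      unfolding tv by (simp add: inner_diff_right alpha_cc[OF m])
    have "r m (t v) = t v - (alpha m \<bullet> t v) *\<^sub>R c m" unfolding srefl_def by simp
    also have "\<dots> = v - (s * (alpha k \<bullet> zi v)) *\<^sub>R c m - (alpha m \<bullet> v - (s * (alpha k \<bullet> zi v)) * 2) *\<^sub>R c m"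
      by (simp only: a) (simp only: tv)
    also have "\<dots> = v + psi v *\<^sub>R c m" unfolding psi_def by (rule vl1)
    finally show ?thesis .
  qed
  have hv: "t (r m v) = v - psi v *\<^sub>R c m" for v
  proof -
    have "zi (r m v) = zi v - (alpha m \<bullet> v) *\<^sub>R zi (c m)"
      unfolding srefl_def using lzi by (simp add: linear_diff linear_scale)
    also have "\<dots> = zi v - (alpha m \<bullet> v / s) *\<^sub>R c k" using zi_cm by simp
    finally have e: "zi (r m v) = zi v - (alpha m \<bullet> v / s) *\<^sub>R c k" .
    have a: "s * (alpha k \<bullet> zi (r m v)) = s * (alpha k \<bullet> zi v) - 2 * (alpha m \<bullet> v)"
      unfolding e using s0 by (simp add: inner_diff_right alpha_cc[OF k] algebra_simps)
    have "t (r m v) = r m v - (s * (alpha k \<bullet> zi (r m v))) *\<^sub>R c m" by (rule tv)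
    also have "\<dots> = v - (alpha m \<bullet> v) *\<^sub>R c m - (s * (alpha k \<bullet> zi v) - 2 * (alpha m \<bullet> v)) *\<^sub>R c m"
      unfolding a by (simp add: srefl_def)
    also have "\<dots> = v - psi v *\<^sub>R c m" unfolding psi_def by (rule vl2)
    finally show ?thesis .
  qed
  have psim: "psi (c m) = 0"
    unfolding psi_def zi_cm using s0 by (simp add: alpha_cc[OF k] alpha_cc[OF m])
  have zW: "z \<in> W" "zi \<in> W" unfolding z_def zi_def using zs by (auto intro!: W_wm)
  have gW: "r m \<circ> t \<in> W" and hW: "t \<circ> r m \<in> W" unfolding t_def using zW k m by auto
  have psi0: "psi (c n) = 0" if n: "n \<in> I" for n
  proof (cases "n = m")
    case True then show ?thesis using psim by simp
  next
    case False
    have "(r m \<circ> t) (c n) \<in> Pos \<or> - (r m \<circ> t) (c n) \<in> Pos" using PN[OF gW n] .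
    then have "0 \<le> psi (c n)" using coef2[OF n m False] gv by simp
    moreover have "(t \<circ> r m) (c n) \<in> Pos \<or> - (t \<circ> r m) (c n) \<in> Pos" using PN[OF hW n] .
    then have "0 \<le> - psi (c n)" using coef2[OF n m False, of "- psi (c n)"] hv by simp
    ultimately show ?thesis by simp
  qed
  have rid: "r m \<circ> t = id"
    by (rule fix_id[OF gW]) (simp add: gv psi0)
  have "t v = r m v" for v
  proof -
    have "r m (t v) = v" using fun_cong[OF rid, of v] by simp
    moreover have "t v = r m (r m (t v))" using m by simp
    ultimately show ?thesis by simp
  qed
  then have "t = r m" by (simp add: fun_eq_iff)
  then show ?thesis unfolding t_def z_def zi_def .
qed

lemma DL:
  assumes ws: "set ws \<subseteq> I" and xs: "set xs \<subseteq> I" and k: "k \<in> I"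
    and bp: "wm xs (c k) \<in> Pos" and wn: "- wm ws (wm xs (c k)) \<in> Pos"
  shows "\<exists>p < length ws. wm ws \<circ> (wm xs \<circ> r k \<circ> wm (rev xs)) = wm (del p ws)"
  using ws wn
proof (induction ws)
  case Nil
  then have "wm xs (c k) = 0" using Pos_neg[OF bp] by simp
  moreover have "wm xs (c k) \<noteq> 0" using wm_nz[OF xs c_nz[OF k]] .
  ultimately show ?case by simp
next
  case (Cons j ws)
  have j: "j \<in> I" and wsI: "set ws \<subseteq> I" using Cons.prems by auto
  define t where "t = wm xs \<circ> r k \<circ> wm (rev xs)"
  define g where "g = wm ws (wm xs (c k))"
  have g_eq: "g = wm (ws @ xs) (c k)" by (simp add: g_def wm_append)
  have wsxs: "wm (ws @ xs) \<in> W" using wsI xs by (intro W_wm) auto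
  have "g \<in> Pos \<or> - g \<in> Pos" using PN[OF wsxs k] g_eq by simp
  then show ?case
  proof
    assume gn: "- g \<in> Pos"
    obtain p where p: "p < length ws" "wm ws \<circ> t = wm (del p ws)"
      using Cons.IH[OF wsI] gn unfolding g_def t_def by blast
    have "wm (j # ws) \<circ> t = r j \<circ> (wm ws \<circ> t)" by (simp add: comp_assoc)
    also have "\<dots> = wm (del (Suc p) (j # ws))" using p(2) by (simp add: del_Cons)
    finally have X: "wm (j # ws) \<circ> (wm xs \<circ> r k \<circ> wm (rev xs)) = wm (del (Suc p) (j # ws))"
      unfolding t_def .
    show ?case
    proof (intro exI[of _ "Suc p"] conjI)
      show "Suc p < length (j # ws)" using p(1) by simp
    qed (rule X)
  next
    assume gp: "g \<in> Pos"
    have "- r j g \<in> Pos" using Cons.prems(2) unfolding g_def by simp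
    then obtain s where gs: "g = s *\<^sub>R c j" using r_Pos_neg[OF j gp] by blast
    have "g \<noteq> 0" unfolding g_def using wm_nz[OF wsI wm_nz[OF xs c_nz[OF k]]] .
    then have s0: "s \<noteq> 0" using gs by auto
    have cr: "wm (ws @ xs) \<circ> r k \<circ> wm (rev (ws @ xs)) = r j"
      by (rule conj_refl[OF _ k j _ s0]) (use wsI xs g_eq gs in auto)
    have e: "wm ws (t v) = r j (wm ws v)" for v
    proof -
      have "(wm (ws @ xs) \<circ> r k \<circ> wm (rev (ws @ xs))) (wm ws v) = r j (wm ws v)"
        using cr by simp
      then show ?thesis unfolding t_def using wsI by (simp add: wm_append)
    qed
    have "wm (j # ws) \<circ> t = wm (del 0 (j # ws))"
      using e j by (simp add: del_0 fun_eq_iff)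
    then have X: "wm (j # ws) \<circ> (wm xs \<circ> r k \<circ> wm (rev xs)) = wm (del 0 (j # ws))"
      unfolding t_def .
    show ?case
    proof (intro exI[of _ 0] conjI)
      show "0 < length (j # ws)" by simp
    qed (rule X)
  qed
qed

lemma t_invol: "set xs \<subseteq> I \<Longrightarrow> k \<in> I \<Longrightarrow> (wm xs \<circ> r k \<circ> wm (rev xs)) ((wm xs \<circ> r k \<circ> wm (rev xs)) v) = v"
  by simp

lemma DC_pos:
  assumes ws: "set ws \<subseteq> I" and xs: "set xs \<subseteq> I" and k: "k \<in> I" and bp: "wm xs (c k) \<in> Pos"
  shows "l (wm ws) < l (wm ws \<circ> (wm xs \<circ> r k \<circ> wm (rev xs))) \<or>
         (\<exists>p < length ws. wm ws \<circ> (wm xs \<circ> r k \<circ> wm (rev xs)) = wm (del p ws))"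
proof -
  define t where "t = wm xs \<circ> r k \<circ> wm (rev xs)"
  have tt: "t (t v) = v" for v unfolding t_def using t_invol[OF xs k] by simp
  have tb: "t (wm xs (c k)) = - wm xs (c k)" unfolding t_def using xs k by (simp add: r_cc wm_neg)
  have wsxs: "wm (ws @ xs) \<in> W" using ws xs by (intro W_wm) auto
  have "wm ws (wm xs (c k)) \<in> Pos \<or> - wm ws (wm xs (c k)) \<in> Pos"
    using PN[OF wsxs k] by (simp add: wm_append)
  then show ?thesis
  proof
    assume "- wm ws (wm xs (c k)) \<in> Pos"
    then show ?thesis using DL[OF ws xs k bp] by blast
  next
    assume pos: "wm ws (wm xs (c k)) \<in> Pos"
    have tW: "wm ws \<circ> t \<in> W" unfolding t_def using ws xs k by (intro W_comp W_wm W_r) auto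
    obtain vs where vs: "set vs \<subseteq> I" "wm vs = wm ws \<circ> t" "length vs = l (wm ws \<circ> t)"
      using l_ex[OF tW] by blast
    have "- wm vs (wm xs (c k)) \<in> Pos" using pos vs(2) tb by (simp add: wm_neg)
    then obtain p where p: "p < length vs" "wm vs \<circ> t = wm (del p vs)"
      using DL[OF vs(1) xs k bp] unfolding t_def by blast
    have "wm vs \<circ> t = wm ws" using vs(2) tt by (simp add: fun_eq_iff)
    then have "l (wm ws) \<le> length (del p vs)" using p(2) l_le[of "del p vs"] vs(1) del_set[of p vs] by auto
    also have "\<dots> < length vs" using p(1) del_len[OF p(1)] by simp
    finally show ?thesis using vs(3) unfolding t_def by simp
  qed
qed

lemma DC:
  assumes t: "t \<in> Wrefls I alpha coalpha" and ws: "set ws \<subseteq> I"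
  shows "l (wm ws) < l (wm ws \<circ> t) \<or> (\<exists>p < length ws. wm ws \<circ> t = wm (del p ws))"
proof -
  obtain xs k where xs: "set xs \<subseteq> I" and k: "k \<in> I" and te: "t = wm xs \<circ> r k \<circ> wm (rev xs)"
    using t unfolding Wrefls_def by blast
  have xW: "wm xs \<in> W" using xs by auto
  show ?thesis
  proof (cases "wm xs (c k) \<in> Pos")
    case True then show ?thesis using DC_pos[OF ws xs k] te by simp
  next
    case False
    then have n: "- wm xs (c k) \<in> Pos" using PN[OF xW k] by simp
    define xs' where "xs' = xs @ [k]"
    have xs': "set xs' \<subseteq> I" unfolding xs'_def using xs k by auto
    have "wm xs' (c k) = - wm xs (c k)" unfolding xs'_def using k by (simp add: wm_append r_cc wm_neg)
    then have bp: "wm xs' (c k) \<in> Pos" using n by simp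
    have "wm xs' \<circ> r k \<circ> wm (rev xs') = t" unfolding te xs'_def using k by (simp add: wm_append fun_eq_iff)
    then show ?thesis using DC_pos[OF ws xs' k bp] by simp
  qed
qed

end

context KM begin

abbreviation bs where "bs \<equiv> bruhat_step I alpha coalpha"
abbreviation ble where "ble \<equiv> bruhat_le I alpha coalpha"
abbreviation Wr where "Wr \<equiv> Wrefls I alpha coalpha"

lemma Wr_W: "t \<in> Wr \<Longrightarrow> t \<in> W"
  unfolding Wrefls_def by (auto intro!: W_comp W_wm W_r)

lemma Wr_invol: "t \<in> Wr \<Longrightarrow> t (t v) = v"
  unfolding Wrefls_def by auto

lemma conj_Wr: assumes y: "y \<in> W" and i: "i \<in> I" shows "\<exists>t\<in>Wr. r i \<circ> y = y \<circ> t"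
proof -
  obtain ys where ys: "set ys \<subseteq> I" "y = wm ys" using y by (auto simp: W_iff)
  define t where "t = wm (rev ys) \<circ> r i \<circ> wm (rev (rev ys))"
  have "set (rev ys) \<subseteq> I" using ys by simp
  then have "t \<in> Wr" unfolding t_def Wrefls_def using i by blast
  moreover have "r i \<circ> y = y \<circ> t" unfolding t_def ys(2) using ys(1) by (simp add: fun_eq_iff)
  ultimately show ?thesis by blast
qed

lemma ble_refl: "x \<in> W \<Longrightarrow> ble x x"
  unfolding bruhat_le_def by simp

lemma ble_trans: "ble x y \<Longrightarrow> ble y z \<Longrightarrow> ble x z"
  unfolding bruhat_le_def by auto

lemma bs_ble: "bs x y \<Longrightarrow> ble x y"
  unfolding bruhat_le_def bruhat_step_def by auto

lemma bsI: "x \<in> W \<Longrightarrow> t \<in> Wr \<Longrightarrow> l x < l (x \<circ> t) \<Longrightarrow> bs x (x \<circ> t)"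
  unfolding bruhat_step_def by blast

lemma bs_W: "bs x y \<Longrightarrow> y \<in> W"
  unfolding bruhat_step_def using Wr_W by blast

lemma rtr_W: "(bs)\<^sup>*\<^sup>* x y \<Longrightarrow> x \<in> W \<Longrightarrow> y \<in> W"
  by (induction rule: rtranclp_induct) (auto dest: bs_W)

lemma rtr_len: "(bs)\<^sup>*\<^sup>* x y \<Longrightarrow> l x \<le> l y"
  by (induction rule: rtranclp_induct) (auto simp: bruhat_step_def)

lemma ble_W: "ble x y \<Longrightarrow> x \<in> W \<and> y \<in> W"
  unfolding bruhat_le_def using rtr_W by blast

lemma ble_len: "ble x y \<Longrightarrow> l x \<le> l y"
  unfolding bruhat_le_def using rtr_len by blast

lemma refl_ne: assumes x: "x \<in> W" and t: "t \<in> Wr" shows "l (x \<circ> t) \<noteq> l x"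
proof
  assume eq: "l (x \<circ> t) = l x"
  obtain xs where xs: "set xs \<subseteq> I" "wm xs = x" "length xs = l x" using l_ex[OF x] by blast
  from DC[OF t xs(1)] eq xs obtain p where p: "p < length xs" "x \<circ> t = wm (del p xs)" by auto
  have "l (x \<circ> t) \<le> length (del p xs)" using p(2) l_le[of "del p xs"] xs(1) del_set[of p xs] by auto
  also have "\<dots> < length xs" using p(1) del_len[OF p(1)] by simp
  finally show False using eq xs(3) by simp
qed

lemma refl_del: assumes t: "t \<in> Wr" and ws: "set ws \<subseteq> I" and lt: "l (wm ws \<circ> t) < l (wm ws)"
  shows "\<exists>p < length ws. wm ws \<circ> t = wm (del p ws)"
  using DC[OF t ws] lt by auto

lemma lift_aux:
  assumes "(bs)\<^sup>*\<^sup>* x y" "x \<in> W" "i \<in> I" "l y < l (r i \<circ> y)"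
  shows "ble (r i \<circ> x) (r i \<circ> y)"
  using assms
proof (induction rule: converse_rtranclp_induct)
  case base
  then show ?case by (intro ble_refl W_comp W_r) auto
next
  case (step x x1)
  obtain t where t: "t \<in> Wr" "x1 = x \<circ> t" "l x < l x1" using step.hyps(1) unfolding bruhat_step_def by blast
  have x: "x \<in> W" using step.prems by simp
  have x1: "x1 \<in> W" using bs_W[OF step.hyps(1)] .
  have i: "i \<in> I" using step.prems by simp
  have y: "y \<in> W" using rtr_W[OF step.hyps(2) x1] .
  have x1y: "ble x1 y" unfolding bruhat_le_def using step.hyps(2) x1 by simp
  have xy: "ble x y" using ble_trans[OF bs_ble[OF step.hyps(1)] x1y] .
  have yry: "ble y (r i \<circ> y)"
  proof -
    obtain t' where t': "t' \<in> Wr" "r i \<circ> y = y \<circ> t'" using conj_Wr[OF y i] by blast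
    have "l y < l (y \<circ> t')" using step.prems(3) unfolding t'(2) .
    then have "bs y (y \<circ> t')" by (rule bsI[OF y t'(1)])
    then show ?thesis using t'(2) bs_ble by simp
  qed
  have rxW: "r i \<circ> x \<in> W" using x i by auto
  obtain t2 where t2: "t2 \<in> Wr" "r i \<circ> x = x \<circ> t2" using conj_Wr[OF x i] by blast
  have "l (r i \<circ> x) \<noteq> l x" using refl_ne[OF x t2(1)] t2(2) by simp
  then consider "l (r i \<circ> x) < l x" | "l x < l (r i \<circ> x)" by linarith
  then show ?case
  proof cases
    case 1
    obtain t3 where t3: "t3 \<in> Wr" "r i \<circ> (r i \<circ> x) = (r i \<circ> x) \<circ> t3" using conj_Wr[OF rxW i] by blast
    have rrx: "r i \<circ> (r i \<circ> x) = x" using i by (auto simp: fun_eq_iff)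
    have e: "(r i \<circ> x) \<circ> t3 = x" by (simp only: t3(2)[symmetric] rrx)
    have bsx: "bs (r i \<circ> x) x" using bsI[OF rxW t3(1)] 1 unfolding e by blast
    show ?thesis by (rule ble_trans[OF bs_ble[OF bsx] ble_trans[OF xy yry]])
  next
    case 2
    have ex1: "r i \<circ> x1 = (r i \<circ> x) \<circ> t" using t(2) by (simp add: comp_assoc)
    have "l (r i \<circ> x1) \<noteq> l (r i \<circ> x)" using refl_ne[OF rxW t(1)] ex1 by simp
    then consider "l (r i \<circ> x) < l (r i \<circ> x1)" | "l (r i \<circ> x1) < l (r i \<circ> x)" by linarith
    then show ?thesis
    proof cases
      case 1
      have bs1: "bs (r i \<circ> x) (r i \<circ> x1)" using bsI[OF rxW t(1)] 1 ex1 by simp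
      have IH1: "ble (r i \<circ> x1) (r i \<circ> y)" using step.IH[OF x1 i step.prems(3)] .
      show ?thesis by (rule ble_trans[OF bs_ble[OF bs1] IH1])
    next
      case b: 2
      have a1: "l (r i \<circ> x) \<le> l x + 1" using l_rl_le[OF x i] .
      have a2: "l x1 \<le> l (r i \<circ> x1) + 1" using l_rl_ge[OF x1 i] .
      have lx1: "l x1 = l x + 1" using a1 a2 b t(3) by linarith
      have lrx1: "l (r i \<circ> x1) + 1 = l x1" using a1 a2 b t(3) by linarith
      have rx1W: "r i \<circ> x1 \<in> W" using x1 i by auto
      obtain vs where vs: "set vs \<subseteq> I" "wm vs = r i \<circ> x1" "length vs = l (r i \<circ> x1)"
        using l_ex[OF rx1W] by blast
      have wx1: "wm (i # vs) = x1" using vs(2) i by (simp add: fun_eq_iff)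
      have ivs: "set (i # vs) \<subseteq> I" using vs i by auto
      have xx: "x1 \<circ> t = x" using t(2) Wr_invol[OF t(1)] by (simp add: fun_eq_iff)
      have "l (wm (i # vs) \<circ> t) < l (wm (i # vs))" unfolding wx1 xx using t(3) .
      then obtain p where p: "p < length (i # vs)" "wm (i # vs) \<circ> t = wm (del p (i # vs))"
        using refl_del[OF t(1) ivs] by blast
      have xdel: "x = wm (del p (i # vs))" using p(2) unfolding wx1 xx .
      show ?thesis
      proof (cases p)
        case 0
        then have "x = wm vs" using xdel by (simp add: del_0)
        then have "r i \<circ> x = x1" using vs(2) i by (simp add: fun_eq_iff)
        then show ?thesis using ble_trans[OF x1y yry] by (simp only:)
      next
        case (Suc p')
        then have "x = r i \<circ> wm (del p' vs)" using xdel by (simp add: del_Cons)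
        then have "r i \<circ> x = wm (del p' vs)" using i by (simp add: fun_eq_iff)
        moreover have "set (del p' vs) \<subseteq> I" by (rule order_trans[OF del_set vs(1)])
        ultimately have "l (r i \<circ> x) \<le> length (del p' vs)" using l_le by simp
        moreover have "length (del p' vs) = length vs - 1" using del_len p(1) Suc by simp
        ultimately show ?thesis using vs(3) lrx1 lx1 2 by linarith
      qed
    qed
  qed
qed

lemma lift: assumes "ble x y" "i \<in> I" "l y < l (r i \<circ> y)" shows "ble (r i \<circ> x) (r i \<circ> y)"
proof -
  have a: "(bs)\<^sup>*\<^sup>* x y" "x \<in> W" using assms(1) unfolding bruhat_le_def by auto
  show ?thesis by (rule lift_aux[OF a assms(2,3)])
qed

lemma red_tl: assumes "set (w # ws) \<subseteq> I" "length (w # ws) = l (wm (w # ws))"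
  shows "length ws = l (wm ws)"
proof -
  have ws: "set ws \<subseteq> I" and w: "w \<in> I" using assms(1) by auto
  have "l (wm ws) \<le> length ws" using l_le[OF ws] .
  moreover have "l (wm (w # ws)) \<le> l (wm ws) + 1" using l_rl_le[OF W_wm[OF ws] w] by simp
  ultimately show ?thesis using assms(2) by simp
qed

lemma subword:
  "sw vs ws \<Longrightarrow> set ws \<subseteq> I \<Longrightarrow> length ws = l (wm ws) \<Longrightarrow> ble (wm vs) (wm ws)"
proof (induction rule: sw.induct)
  case sw_nil
  show ?case by (simp only: wm_Nil) (rule ble_refl[OF W_id])
next
  case (sw_skip vs ws w)
  have ws: "set ws \<subseteq> I" and w: "w \<in> I" using sw_skip.prems by auto
  have red: "length ws = l (wm ws)" using red_tl sw_skip.prems by blast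
  have IH: "ble (wm vs) (wm ws)" using sw_skip.IH ws red by simp
  obtain t where t: "t \<in> Wr" "r w \<circ> wm ws = wm ws \<circ> t" using conj_Wr[OF W_wm[OF ws] w] by blast
  have L: "length (w # ws) = l (wm (w # ws))" using sw_skip.prems(2) .
  have e: "wm (w # ws) = wm ws \<circ> t" by (simp only: wm_Cons t(2))
  have "l (wm ws) < l (wm (w # ws))" using L red by (simp only: length_Cons)
  then have "l (wm ws) < l (wm ws \<circ> t)" unfolding e .
  then have "bs (wm ws) (wm ws \<circ> t)" by (rule bsI[OF W_wm[OF ws] t(1)])
  then have "bs (wm ws) (wm (w # ws))" unfolding e .
  then show ?case by (rule ble_trans[OF IH bs_ble])
next
  case (sw_take vs ws w)
  have ws: "set ws \<subseteq> I" and w: "w \<in> I" using sw_take.prems by auto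
  have red: "length ws = l (wm ws)" using red_tl sw_take.prems by blast
  have IH: "ble (wm vs) (wm ws)" using sw_take.IH ws red by simp
  have L: "length (w # ws) = l (wm (w # ws))" using sw_take.prems(2) .
  have "l (wm ws) < l (wm (w # ws))" using L red by (simp only: length_Cons)
  then have "l (wm ws) < l (r w \<circ> wm ws)" by (simp only: wm_Cons)
  from lift[OF IH w this] show ?case by (simp only: wm_Cons)
qed

lemma hull_foldr:
  "foldr (Rop I alpha coalpha) ws {mu} \<subseteq> convex hull {wm vs mu | vs. sw vs ws}"
proof (induction ws)
  case Nil
  have "mu \<in> {wm vs mu | vs. sw vs []}" using sw_nil by force
  then show ?case using hull_subset by fastforce
next
  case (Cons i ws)
  define E where "E = foldr (Rop I alpha coalpha) ws {mu}"
  define S where "S = {wm vs mu | vs. sw vs ws}"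
  define S' where "S' = {wm vs mu | vs. sw vs (i # ws)}"
  have ES: "E \<subseteq> convex hull S" using Cons unfolding E_def S_def .
  have "r i ` E \<subseteq> r i ` (convex hull S)" using ES by blast
  also have "\<dots> = convex hull (r i ` S)" by (rule convex_hull_linear_image[OF lin_r])
  finally have rES: "r i ` E \<subseteq> convex hull (r i ` S)" .
  have SS': "S \<subseteq> S'" unfolding S_def S'_def by (auto intro: sw_skip)
  have rSS': "r i ` S \<subseteq> S'" unfolding S_def S'_def
  proof clarify
    fix vs assume "sw vs ws"
    then have "sw (i # vs) (i # ws)" by (rule sw_take)
    then show "\<exists>vs'. r i (wm vs mu) = wm vs' mu \<and> sw vs' (i # ws)"
      by (rule_tac x="i # vs" in exI) simp
  qed
  have h1: "convex hull S \<subseteq> convex hull S'" by (rule hull_mono[OF SS'])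
  have h2: "convex hull (r i ` S) \<subseteq> convex hull S'" by (rule hull_mono[OF rSS'])
  have "E \<union> r i ` E \<subseteq> convex hull S'"
    using ES rES h1 h2 by blast
  then have h3: "convex hull (E \<union> r i ` E) \<subseteq> convex hull S'" by (rule convex_hull_subset)
  have "foldr (Rop I alpha coalpha) (i # ws) {mu} = Rop I alpha coalpha i E"
    unfolding E_def by simp
  also have "\<dots> \<subseteq> convex hull (E \<union> r i ` E)"
    unfolding Rop_def by (rule Int_lower1)
  also have "\<dots> \<subseteq> convex hull S'" by (rule h3)
  finally show ?case unfolding S'_def .
qed

lemma finite_B: assumes "u \<in> W" shows "finite {u'. ble u' u}"
proof -
  have "{u'. ble u' u} \<subseteq> wm ` {xs. set xs \<subseteq> I \<and> length xs \<le> l u}"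
  proof
    fix u' assume "u' \<in> {u'. ble u' u}"
    then have b: "ble u' u" by simp
    then have "u' \<in> W" "l u' \<le> l u" using ble_W ble_len by auto
    then obtain xs where xs: "set xs \<subseteq> I" "wm xs = u'" "length xs = l u'" using l_ex by blast
    then show "u' \<in> wm ` {xs. set xs \<subseteq> I \<and> length xs \<le> l u}" using \<open>l u' \<le> l u\<close>
      by (intro image_eqI[of _ _ xs]) auto
  qed
  moreover have "finite (wm ` {xs. set xs \<subseteq> I \<and> length xs \<le> l u})"
    by (rule finite_imageI[OF finite_lists_length_le[OF finI]])
  ultimately show ?thesis by (rule finite_subset)
qed

end

lemma hull_rep:
  fixes f :: "'b \<Rightarrow> 'a::real_vector"
  assumes fin: "finite B"
  shows "convex hull (f ` B) \<subseteq> {y. \<exists>lam. (\<forall>b\<in>B. 0 \<le> lam b) \<and> sum lam B = 1 \<and> y = (\<Sum>b\<in>B. lam b *\<^sub>R f b)}"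
    (is "_ \<subseteq> ?C")
proof (rule hull_minimal)
  show "f ` B \<subseteq> ?C"
  proof
    fix y assume "y \<in> f ` B"
    then obtain b0 where b0: "b0 \<in> B" "y = f b0" by blast
    define lam where "lam b = (if b = b0 then 1 else (0::real))" for b
    have "sum lam B = (\<Sum>b\<in>B. if b = b0 then 1 else 0)" unfolding lam_def ..
    also have "\<dots> = 1" using b0(1) fin by simp
    finally have s1: "sum lam B = 1" .
    have "(\<Sum>b\<in>B. lam b *\<^sub>R f b) = (\<Sum>b\<in>B. if b = b0 then f b0 else 0)"
      by (rule sum.cong) (simp_all add: lam_def)
    also have "\<dots> = f b0" using b0(1) fin by simp
    finally have s2: "y = (\<Sum>b\<in>B. lam b *\<^sub>R f b)" using b0(2) by simp
    have s3: "\<forall>b\<in>B. 0 \<le> lam b" unfolding lam_def by simp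
    show "y \<in> ?C" unfolding mem_Collect_eq by (rule exI[of _ lam]) (use s1 s2 s3 in simp)
  qed
  show "convex ?C"
    unfolding convex_def
  proof (intro ballI allI impI)
    fix x y and u v :: real
    assume xC: "x \<in> ?C" and yC: "y \<in> ?C" and uv: "0 \<le> u" "0 \<le> v" "u + v = 1"
    from xC obtain l1 where l1: "\<forall>b\<in>B. 0 \<le> l1 b" "sum l1 B = 1" "x = (\<Sum>b\<in>B. l1 b *\<^sub>R f b)"
      unfolding mem_Collect_eq by (elim exE conjE) simp
    from yC obtain l2 where l2: "\<forall>b\<in>B. 0 \<le> l2 b" "sum l2 B = 1" "y = (\<Sum>b\<in>B. l2 b *\<^sub>R f b)"
      unfolding mem_Collect_eq by (elim exE conjE) simp
    define lam where "lam b = u * l1 b + v * l2 b" for b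
    have s3: "\<forall>b\<in>B. 0 \<le> lam b" unfolding lam_def using l1 l2 uv by simp
    have "sum lam B = (\<Sum>b\<in>B. u * l1 b) + (\<Sum>b\<in>B. v * l2 b)"
      unfolding lam_def by (rule sum.distrib)
    also have "\<dots> = u * sum l1 B + v * sum l2 B" by (simp only: sum_distrib_left)
    also have "\<dots> = 1" using l1(2) l2(2) uv(3) by simp
    finally have s1: "sum lam B = 1" .
    have "u *\<^sub>R x + v *\<^sub>R y = (\<Sum>b\<in>B. u *\<^sub>R (l1 b *\<^sub>R f b)) + (\<Sum>b\<in>B. v *\<^sub>R (l2 b *\<^sub>R f b))"
      by (simp only: l1(3) l2(3) scaleR_sum_right)
    also have "\<dots> = (\<Sum>b\<in>B. u *\<^sub>R (l1 b *\<^sub>R f b) + v *\<^sub>R (l2 b *\<^sub>R f b))"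
      by (rule sum.distrib[symmetric])
    also have "\<dots> = (\<Sum>b\<in>B. lam b *\<^sub>R f b)"
      by (rule sum.cong) (simp_all add: lam_def scaleR_add_left)
    finally have s2: "u *\<^sub>R x + v *\<^sub>R y = (\<Sum>b\<in>B. lam b *\<^sub>R f b)" .
    show "u *\<^sub>R x + v *\<^sub>R y \<in> ?C" unfolding mem_Collect_eq by (rule exI[of _ lam]) (use s1 s2 s3 in simp)
  qed
qed


theorem mainTheorem7:
  fixes I :: "'i set" and a :: "'i \<Rightarrow> 'i \<Rightarrow> int"
    and alpha coalpha :: "'i \<Rightarrow> real^'d"
    and u :: "real^'d \<Rightarrow> real^'d" and mu nu :: "real^'d"
  assumes "finite I"
    and "gcm I a"
    and "\<forall>i\<in>I. coalpha i \<in> Ylat"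
    and "\<forall>i\<in>I. \<forall>k. alpha i $ k \<in> \<int>"
    and "inj_on coalpha I" and "independent (coalpha ` I)"
    and "\<forall>i\<in>I. \<forall>j\<in>I. alpha j \<bullet> coalpha i = of_int (a i j)"
    and "u \<in> Weyl I alpha coalpha"
    and "mu \<in> Ylat"
    and "nu \<in> Rw I alpha coalpha u mu"
  shows "\<exists>lam :: (real^'d \<Rightarrow> real^'d) \<Rightarrow> real.
           (\<forall>u'. bruhat_le I alpha coalpha u' u \<longrightarrow> 0 \<le> lam u' \<and> lam u' \<le> 1)
         \<and> (\<Sum>u'\<in>{u'. bruhat_le I alpha coalpha u' u}. lam u') = 1
         \<and> nu = (\<Sum>u'\<in>{u'. bruhat_le I alpha coalpha u' u}. lam u' *\<^sub>R u' mu)"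
proof -
  interpret K: KM I a alpha coalpha
    by (unfold_locales) (use assms(1,2,5,6,7) in auto)
  from assms(10) obtain ws where ws: "reduced_expr I alpha coalpha u ws"
    and nuin: "nu \<in> foldr (Rop I alpha coalpha) ws {mu}"
    unfolding Rw_def by blast
  have wsI: "set ws \<subseteq> I" and wsu: "wmap alpha coalpha ws = u"
    and wsl: "length ws = wlen I alpha coalpha u"
    using ws unfolding reduced_expr_def by auto
  define B where "B = {u'. bruhat_le I alpha coalpha u' u}"
  have finB: "finite B" unfolding B_def by (rule K.finite_B[OF assms(8)])
  have sub: "{wmap alpha coalpha vs mu | vs. sw vs ws} \<subseteq> (\<lambda>u'. u' mu) ` B"
  proof
    fix y assume "y \<in> {wmap alpha coalpha vs mu | vs. sw vs ws}"
    then obtain vs where vs: "sw vs ws" "y = wmap alpha coalpha vs mu" by blast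
    have "length ws = wlen I alpha coalpha (wmap alpha coalpha ws)" using wsl wsu by simp
    then have "bruhat_le I alpha coalpha (wmap alpha coalpha vs) (wmap alpha coalpha ws)"
      by (rule K.subword[OF vs(1) wsI])
    then have "wmap alpha coalpha vs \<in> B" unfolding B_def using wsu by simp
    then show "y \<in> (\<lambda>u'. u' mu) ` B" using vs(2) by (simp add: image_iff) blast
  qed
  have "nu \<in> convex hull {wmap alpha coalpha vs mu | vs. sw vs ws}"
    using K.hull_foldr[of ws mu] nuin by (rule subsetD)
  then have "nu \<in> convex hull ((\<lambda>u'. u' mu) ` B)"
    using hull_mono[OF sub, of convex] by (rule rev_subsetD)
  then have "nu \<in> {y. \<exists>lam. (\<forall>b\<in>B. 0 \<le> lam b) \<and> sum lam B = 1 \<and> y = (\<Sum>b\<in>B. lam b *\<^sub>R b mu)}"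
    using hull_rep[OF finB, of "\<lambda>u'. u' mu"] by (rule rev_subsetD)
  then obtain lam where lam: "\<forall>b\<in>B. 0 \<le> lam b" "sum lam B = 1" "nu = (\<Sum>b\<in>B. lam b *\<^sub>R b mu)"
    unfolding mem_Collect_eq by (elim exE conjE) simp
  have le1: "\<forall>b\<in>B. lam b \<le> 1"
  proof
    fix b assume "b \<in> B"
    have "lam b \<le> sum lam B" by (rule member_le_sum[OF \<open>b \<in> B\<close>]) (use lam(1) finB in auto)
    then show "lam b \<le> 1" using lam(2) by simp
  qed
  have "(\<forall>u'. bruhat_le I alpha coalpha u' u \<longrightarrow> 0 \<le> lam u' \<and> lam u' \<le> 1)"
    using lam(1) le1 unfolding B_def by simp
  moreover have "(\<Sum>u'\<in>{u'. bruhat_le I alpha coalpha u' u}. lam u') = 1" using lam(2) unfolding B_def .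
  moreover have "nu = (\<Sum>u'\<in>{u'. bruhat_le I alpha coalpha u' u}. lam u' *\<^sub>R u' mu)"
    using lam(3) unfolding B_def .
  ultimately show ?thesis by blast
qed


end
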